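(* For every integer $n\ge 3$, the polytope $\operatorname{conv}\phi_3$ is affinely isomorphic to a face of the polytope $\operatorname{conv}\phi_n$.
   Context: For $n\ge 3$, $\phi_n$ is the set of $\binom{n}{2}\times\binom{n}{2}$ permutation matrices of the edges of the complete graph $K_n$ induced by permutations of its vertices: for a permutation $\sigma$ of $[n]$, the associated vector $\bm{z}\in\{0,1\}^{\binom{n}{2}\times\binom{n}{2}}$ has coordinates $z_{ijkl}$, $i,j,k,l\in[n]$, $i<j$, $k<l$, with $z_{ijkl}=1$ iff $\{\sigma(i),\sigma(j)\}=\{k,l\}$, and $0$ otherwise. Thus $\phi_n$ has $n!$ elements. *)

theory Defs
  imports "HOL-Analysis.Analysis" "HOL-Combinatorics.Permutations"
begin

text \<open>Vertices of K_n are the elements of a finite linearly ordered type 'n (n = CARD('n)).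
  Coordinates z_{ijkl} are indexed by ((i,j),(k,l)); only those with i<j, k<l are meaningful,
  all other coordinates are identically 0.\<close>

definition edge_perm_matrix :: "('n::{finite,linorder} \<Rightarrow> 'n) \<Rightarrow> real ^ (('n \<times> 'n) \<times> ('n \<times> 'n))" where
  "edge_perm_matrix \<sigma> = (\<chi> p. (case p of ((i,j),(k,l)) \<Rightarrow>
      if i < j \<and> k < l \<and> {\<sigma> i, \<sigma> j} = {k, l} then 1 else 0))"

definition phi :: "(real ^ (('n::{finite,linorder} \<times> 'n) \<times> ('n \<times> 'n))) set" where
  "phi = edge_perm_matrix ` {\<sigma>. \<sigma> permutes (UNIV :: 'n set)}"

definition affinely_isomorphic :: "'a::real_vector set \<Rightarrow> 'b::real_vector set \<Rightarrow> bool" where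
  "affinely_isomorphic P Q \<longleftrightarrow>
     (\<exists>g c. linear g \<and> bij_betw (\<lambda>x. g x + c) P Q)"

end

theory Submission
  imports Defs
begin

lemma epm_nth: "edge_perm_matrix \<sigma> $ ((i,j),(k,l)) = (if i<j \<and> k<l \<and> {\<sigma> i, \<sigma> j} = {k,l} then 1 else 0)"
  by (simp add: edge_perm_matrix_def)

lemma opp3:
  assumes "CARD('m::{finite,linorder}) = 3"
  shows "\<exists>u w. u < w \<and> - {a::'m} = {u,w}"
proof -
  have "card (UNIV - {a}) = 2" using assms by (simp add: card_Diff_singleton)
  then obtain x y where xy: "UNIV - {a} = {x,y}" "x \<noteq> y" by (meson card_2_iff)
  show ?thesis
  proof (cases "x < y")
    case True then show ?thesis using xy by (metis Compl_eq_Diff_UNIV)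
  next
    case False then have "y < x" using xy(2) by simp
    then show ?thesis using xy by (metis Compl_eq_Diff_UNIV insert_commute)
  qed
qed

lemma pair_iff:
  fixes u :: "'a::linorder"
  assumes "u < w" "- {a} = {u,w}"
  shows "(i < j \<and> a \<noteq> i \<and> a \<noteq> j) \<longleftrightarrow> (i = u \<and> j = w)"
proof
  assume h: "i < j \<and> a \<noteq> i \<and> a \<noteq> j"
  then have "i \<in> {u,w}" "j \<in> {u,w}" using assms(2) by (auto simp: set_eq_iff)
  then show "i = u \<and> j = w" using h assms(1) by auto
next
  assume "i = u \<and> j = w"
  then show "i < j \<and> a \<noteq> i \<and> a \<noteq> j" using assms by (auto simp: set_eq_iff)
qed

definition Pm :: "real ^ (('m::{finite,linorder} \<times> 'm) \<times> ('m \<times> 'm)) \<Rightarrow> 'm \<Rightarrow> 'm \<Rightarrow> real" where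
  "Pm z a b = (\<Sum>p\<in>UNIV. (case p of ((i,j),(k,l)) \<Rightarrow>
      if i<j \<and> k<l \<and> a \<noteq> i \<and> a \<noteq> j \<and> b \<noteq> k \<and> b \<noteq> l then z $ p else 0))"

lemma Pm_epm:
  assumes "CARD('m::{finite,linorder}) = 3" "\<tau> permutes (UNIV::'m set)"
  shows "Pm (edge_perm_matrix \<tau>) a b = (if \<tau> a = b then 1 else 0)"
proof -
  obtain u w where uw: "u < w" "- {a} = {u,w}" using opp3[OF assms(1)] by blast
  obtain k l where kl: "k < l" "- {b} = {k,l}" using opp3[OF assms(1)] by blast
  have "Pm (edge_perm_matrix \<tau>) a b = (\<Sum>p\<in>UNIV. if p = ((u,w),(k,l)) then edge_perm_matrix \<tau> $ p else 0)"
    unfolding Pm_def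
  proof (rule sum.cong[OF refl])
    fix p :: "('m \<times> 'm) \<times> ('m \<times> 'm)"
    obtain i j k' l' where p: "p = ((i,j),(k',l'))" by (metis prod.collapse)
    show "(case p of ((i,j),(k,l)) \<Rightarrow>
      if i<j \<and> k<l \<and> a \<noteq> i \<and> a \<noteq> j \<and> b \<noteq> k \<and> b \<noteq> l then edge_perm_matrix \<tau> $ p else 0) =
      (if p = ((u,w),(k,l)) then edge_perm_matrix \<tau> $ p else 0)"
      using pair_iff[OF uw, of i j] pair_iff[OF kl, of k' l'] p by auto
  qed
  also have "\<dots> = edge_perm_matrix \<tau> $ ((u,w),(k,l))" by simp
  also have "\<dots> = (if {\<tau> u, \<tau> w} = {k,l} then 1 else 0)" using uw kl by (simp add: epm_nth)
  also have "{\<tau> u, \<tau> w} = - {\<tau> a}"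
  proof -
    have "bij \<tau>" using assms(2) permutes_bij by blast
    then have "\<tau> ` (- {a}) = - (\<tau> ` {a})" by (simp add: bij_image_Compl_eq)
    then show ?thesis using uw by simp
  qed
  finally show ?thesis using kl(2) by (auto simp: set_eq_iff)
qed

definition ext :: "('m::{finite,linorder} \<Rightarrow> 'n::{finite,linorder}) \<Rightarrow> ('m \<Rightarrow> 'm) \<Rightarrow> 'n \<Rightarrow> 'n" where
  "ext h \<tau> v = (if v \<in> range h then h (\<tau> (inv h v)) else v)"

definition Lf :: "('m::{finite,linorder} \<Rightarrow> 'n::{finite,linorder}) \<Rightarrow> real ^ (('m \<times> 'm) \<times> ('m \<times> 'm)) \<Rightarrow> 'n \<Rightarrow> 'n \<Rightarrow> real" where
  "Lf h z x y = (if x \<in> range h \<and> y \<in> range h then Pm z (inv h x) (inv h y) else 0)"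

definition Kf :: "('m::{finite,linorder} \<Rightarrow> 'n::{finite,linorder}) \<Rightarrow> 'n \<Rightarrow> 'n \<Rightarrow> real" where
  "Kf h x y = (if x \<notin> range h \<and> y \<notin> range h \<and> x = y then 1 else 0)"

definition gmap :: "('m::{finite,linorder} \<Rightarrow> 'n::{finite,linorder}) \<Rightarrow> real ^ (('m \<times> 'm) \<times> ('m \<times> 'm)) \<Rightarrow> real ^ (('n \<times> 'n) \<times> ('n \<times> 'n))" where
  "gmap h z = (\<chi> p. case p of ((i,j),(k,l)) \<Rightarrow>
     if i<j \<and> k<l then
       (if i \<in> range h \<and> j \<in> range h \<and> k \<in> range h \<and> l \<in> range h
        then z $ ((inv h i, inv h j),(inv h k, inv h l))
        else Lf h z i k * Kf h j l + Kf h i k * Lf h z j l + Lf h z i l * Kf h j k + Kf h i l * Lf h z j k)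
     else 0)"

definition cvec :: "('m::{finite,linorder} \<Rightarrow> 'n::{finite,linorder}) \<Rightarrow> real ^ (('n \<times> 'n) \<times> ('n \<times> 'n))" where
  "cvec h = (\<chi> p. case p of ((i,j),(k,l)) \<Rightarrow>
     if i<j \<and> k<l \<and> \<not> (i \<in> range h \<and> j \<in> range h \<and> k \<in> range h \<and> l \<in> range h)
     then Kf h i k * Kf h j l + Kf h i l * Kf h j k else 0)"

lemma Pm_add: "Pm (x + y) a b = Pm x a b + Pm y a b"
  unfolding Pm_def by (auto simp: sum.distrib[symmetric] case_prod_unfold intro!: sum.cong)

lemma Pm_scale: "Pm (c *\<^sub>R x) a b = c * Pm x a b"
  unfolding Pm_def by (auto simp: sum_distrib_left case_prod_unfold intro!: sum.cong)

lemma linear_gmap: "linear (gmap h)"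
proof (rule linearI)
  show "gmap h (x + y) = gmap h x + gmap h y" for x y
    by (simp add: gmap_def vec_eq_iff Lf_def Pm_add case_prod_unfold algebra_simps)
  show "gmap h (c *\<^sub>R x) = c *\<^sub>R gmap h x" for c x
    by (simp add: gmap_def vec_eq_iff Lf_def Pm_scale case_prod_unfold algebra_simps)
qed

lemma ext_permutes:
  assumes "\<tau> permutes (UNIV::'m::{finite,linorder} set)" "strict_mono (h::'m \<Rightarrow> 'n::{finite,linorder})"
  shows "ext h \<tau> permutes UNIV"
proof -
  have ih: "inj h" using assms(2) strict_mono_imp_inj_on by blast
  have it: "inj \<tau>" using assms(1) permutes_inj by blast
  have "inj (ext h \<tau>)"
  proof (rule injI)
    fix x y assume e: "ext h \<tau> x = ext h \<tau> y"
    show "x = y"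
    proof (cases "x \<in> range h"; cases "y \<in> range h")
      assume "x \<in> range h" "y \<in> range h"
      then show ?thesis using e ih it unfolding ext_def
        by (metis f_inv_into_f injD)
    qed (use e in \<open>auto simp: ext_def\<close>)
  qed
  then show ?thesis by (intro inj_imp_permutes) auto
qed

lemma LK:
  assumes "CARD('m::{finite,linorder}) = 3" "\<tau> permutes (UNIV::'m set)" "strict_mono (h::'m \<Rightarrow> 'n::{finite,linorder})"
  shows "Lf h (edge_perm_matrix \<tau>) x y + Kf h x y = (if ext h \<tau> x = y then 1 else 0)"
proof -
  have ih: "inj h" using assms(3) strict_mono_imp_inj_on by blast
  show ?thesis
  proof (cases "x \<in> range h")
    case True
    then obtain x' where x': "x = h x'" by blast
    show ?thesis
    proof (cases "y \<in> range h")
      case True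
      then obtain y' where y': "y = h y'" by blast
      have "(h (\<tau> x') = h y') = (\<tau> x' = y')" using ih by (simp add: inj_eq)
      then show ?thesis using Pm_epm[OF assms(1,2)] ih x' y'
        by (simp add: Lf_def Kf_def ext_def)
    next
      case False
      then show ?thesis using x' by (auto simp: Lf_def Kf_def ext_def)
    qed
  next
    case False
    then show ?thesis by (auto simp: Lf_def Kf_def ext_def)
  qed
qed

lemma two_set_eq:
  assumes "(a::'a) \<noteq> b" "c \<noteq> d"
  shows "(if {a,b} = {c,d} then 1 else 0 :: real) =
     (if a = c then 1 else 0) * (if b = d then 1 else 0) + (if a = d then 1 else 0) * (if b = c then 1 else 0)"
  using assms by (auto simp: doubleton_eq_iff)

lemma gmap_nth: "gmap h z $ ((i,j),(k,l)) = (if i<j \<and> k<l then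
       (if i \<in> range h \<and> j \<in> range h \<and> k \<in> range h \<and> l \<in> range h
        then z $ ((inv h i, inv h j),(inv h k, inv h l))
        else Lf h z i k * Kf h j l + Kf h i k * Lf h z j l + Lf h z i l * Kf h j k + Kf h i l * Lf h z j k)
     else 0)"
  by (simp add: gmap_def)

lemma cvec_nth: "cvec h $ ((i,j),(k,l)) = (if i<j \<and> k<l \<and> \<not> (i \<in> range h \<and> j \<in> range h \<and> k \<in> range h \<and> l \<in> range h)
     then Kf h i k * Kf h j l + Kf h i l * Kf h j k else 0)"
  by (simp add: cvec_def)

lemma gmap_epm:
  assumes "CARD('m::{finite,linorder}) = 3" "\<tau> permutes (UNIV::'m set)" "strict_mono (h::'m \<Rightarrow> 'n::{finite,linorder})"
  shows "gmap h (edge_perm_matrix \<tau>) + cvec h = edge_perm_matrix (ext h \<tau>)"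
proof -
  have ih: "inj h" using assms(3) strict_mono_imp_inj_on by blast
  have isj: "inj (ext h \<tau>)" using ext_permutes[OF assms(2,3)] permutes_inj by blast
  show ?thesis
  proof (subst vec_eq_iff, rule allI)
    fix p :: "('n \<times> 'n) \<times> ('n \<times> 'n)"
    obtain i j k l where p: "p = ((i,j),(k,l))" by (metis prod.collapse)
    let ?z = "edge_perm_matrix \<tau>"
    let ?s = "ext h \<tau>"
    show "(gmap h ?z + cvec h) $ p = edge_perm_matrix ?s $ p"
    proof (cases "i<j \<and> k<l")
      case False then show ?thesis by (auto simp: p gmap_def cvec_def epm_nth)
    next
      case ord: True
      show ?thesis
      proof (cases "i \<in> range h \<and> j \<in> range h \<and> k \<in> range h \<and> l \<in> range h")
        case True
        then obtain i' j' k' l' where e: "i = h i'" "j = h j'" "k = h k'" "l = h l'" by blast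
        have o1: "(h i' < h j') = (i' < j')" "(h k' < h l') = (k' < l')"
          using assms(3) by (simp_all add: strict_mono_less)
        have "({h (\<tau> i'), h (\<tau> j')} = {h k', h l'}) = ({\<tau> i', \<tau> j'} = {k', l'})"
          using inj_image_eq_iff[OF ih, of "{\<tau> i', \<tau> j'}" "{k', l'}"] by simp
        then show ?thesis using o1 ord True ih
          by (simp add: p e gmap_def cvec_def epm_nth ext_def)
      next
        case False
        have nF: "(i \<in> range h \<and> j \<in> range h \<and> k \<in> range h \<and> l \<in> range h) = False"
          using False by simp
        have L0: "Lf h ?z x y = 0" if "x \<notin> range h \<or> y \<notin> range h" for x y
          using that unfolding Lf_def by auto
        have LL: "Lf h ?z i k * Lf h ?z j l = 0" "Lf h ?z i l * Lf h ?z j k = 0"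
          using False L0 by (metis mult_eq_0_iff)+
        have LKs: "\<And>x y. Lf h ?z x y + Kf h x y = (if ?s x = y then 1 else 0)"
          using LK[OF assms] by blast
        have ne: "?s i \<noteq> ?s j" "k \<noteq> l" using ord isj by (auto simp: inj_eq)
        have "(gmap h ?z + cvec h) $ p =
          Lf h ?z i k * Kf h j l + Kf h i k * Lf h ?z j l + Lf h ?z i l * Kf h j k + Kf h i l * Lf h ?z j k
          + (Kf h i k * Kf h j l + Kf h i l * Kf h j k)"
          using ord unfolding p vector_add_component gmap_nth cvec_nth nF by simp
        also have "\<dots> = (Lf h ?z i k + Kf h i k) * (Lf h ?z j l + Kf h j l) + (Lf h ?z i l + Kf h i l) * (Lf h ?z j k + Kf h j k)"
          using LL by (simp only: algebra_simps)
        also have "\<dots> = (if {?s i, ?s j} = {k,l} then 1 else 0)"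
          unfolding LKs using two_set_eq[OF ne] by simp
        finally show ?thesis using ord by (simp add: p epm_nth)
      qed
    qed
  qed
qed

definition avec :: "('m::{finite,linorder} \<Rightarrow> 'n::{finite,linorder}) \<Rightarrow> real ^ (('n \<times> 'n) \<times> ('n \<times> 'n))" where
  "avec h = (\<chi> p. case p of ((i,j),(k,l)) \<Rightarrow>
     if i<j \<and> k<l \<and> {i,j} - range h = {k,l} - range h then 1 else 0)"

definition Nn :: "'n::{finite,linorder} itself \<Rightarrow> real" where
  "Nn _ = (\<Sum>e\<in>(UNIV::('n \<times> 'n) set). if fst e < snd e then 1 else 0)"

lemma sum_pairs:
  assumes "(x::'n::{finite,linorder}) \<noteq> y"
  shows "(\<Sum>e\<in>(UNIV::('n \<times> 'n) set). if fst e < snd e \<and> {x,y} = {fst e, snd e} then 1 else 0) = (1::real)"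
proof -
  have "(\<Sum>e\<in>(UNIV::('n \<times> 'n) set). if fst e < snd e \<and> {x,y} = {fst e, snd e} then 1 else 0)
      = (\<Sum>e\<in>(UNIV::('n \<times> 'n) set). if e = (min x y, max x y) then 1 else (0::real))"
  proof (rule sum.cong[OF refl])
    fix e :: "'n \<times> 'n"
    obtain a b where e: "e = (a,b)" by fastforce
    show "(if fst e < snd e \<and> {x,y} = {fst e, snd e} then 1 else 0) = (if e = (min x y, max x y) then 1 else (0::real))"
      using assms by (auto simp: e doubleton_eq_iff min_def max_def)
  qed
  also have "\<dots> = 1" by simp
  finally show ?thesis .
qed

lemma avec_epm:
  assumes "\<sigma> permutes (UNIV::'n::{finite,linorder} set)"
  shows "avec (h::'m::{finite,linorder} \<Rightarrow> 'n) \<bullet> edge_perm_matrix \<sigma> =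
    (\<Sum>e\<in>(UNIV::('n \<times> 'n) set). if fst e < snd e \<and> {fst e, snd e} - range h = {\<sigma> (fst e), \<sigma> (snd e)} - range h then 1 else 0)"
proof -
  have inj: "inj \<sigma>" using assms permutes_inj by blast
  have "avec h \<bullet> edge_perm_matrix \<sigma> = (\<Sum>p\<in>UNIV. avec h $ p * edge_perm_matrix \<sigma> $ p)"
    by (simp add: inner_vec_def)
  also have "\<dots> = (\<Sum>e\<in>UNIV. \<Sum>e'\<in>UNIV. avec h $ (e,e') * edge_perm_matrix \<sigma> $ (e,e'))"
    by (simp add: sum.cartesian_product UNIV_Times_UNIV[symmetric] del: UNIV_Times_UNIV)
  also have "\<dots> = (\<Sum>e\<in>(UNIV::('n \<times> 'n) set). if fst e < snd e \<and> {fst e, snd e} - range h = {\<sigma> (fst e), \<sigma> (snd e)} - range h then 1 else 0)"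
  proof (rule sum.cong[OF refl])
    fix e :: "'n \<times> 'n"
    obtain i j where e: "e = (i,j)" by fastforce
    have "(\<Sum>e'\<in>UNIV. avec h $ (e,e') * edge_perm_matrix \<sigma> $ (e,e')) =
       (\<Sum>e'\<in>(UNIV::('n \<times> 'n) set). if i < j \<and> {i,j} - range h = {\<sigma> i, \<sigma> j} - range h
          then (if fst e' < snd e' \<and> {\<sigma> i, \<sigma> j} = {fst e', snd e'} then 1 else 0) else 0)"
    proof (rule sum.cong[OF refl])
      fix e' :: "'n \<times> 'n"
      obtain k l where e': "e' = (k,l)" by fastforce
      show "avec h $ (e,e') * edge_perm_matrix \<sigma> $ (e,e') =
        (if i < j \<and> {i,j} - range h = {\<sigma> i, \<sigma> j} - range h
          then (if fst e' < snd e' \<and> {\<sigma> i, \<sigma> j} = {fst e', snd e'} then 1 else 0) else 0)"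
        by (auto simp: e e' avec_def epm_nth)
    qed
    also have "\<dots> = (if i < j \<and> {i,j} - range h = {\<sigma> i, \<sigma> j} - range h then 1 else 0)"
    proof (cases "i < j \<and> {i,j} - range h = {\<sigma> i, \<sigma> j} - range h")
      case True
      then have "\<sigma> i \<noteq> \<sigma> j" using inj by (auto simp: inj_eq)
      then show ?thesis using sum_pairs[of "\<sigma> i" "\<sigma> j"] True by simp
    next
      case False
      then show ?thesis by (simp only: if_False sum.neutral_const)
    qed
    finally show "(\<Sum>e'\<in>UNIV. avec h $ (e,e') * edge_perm_matrix \<sigma> $ (e,e')) =
      (if fst e < snd e \<and> {fst e, snd e} - range h = {\<sigma> (fst e), \<sigma> (snd e)} - range h then 1 else 0)"
      by (simp add: e)
  qed
  finally show ?thesis .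
qed

lemma avec_bound:
  assumes "\<sigma> permutes (UNIV::'n::{finite,linorder} set)"
  shows "avec (h::'m::{finite,linorder} \<Rightarrow> 'n) \<bullet> edge_perm_matrix \<sigma> \<le> Nn TYPE('n)"
    and "avec h \<bullet> edge_perm_matrix \<sigma> = Nn TYPE('n) \<longleftrightarrow>
         (\<forall>i j. i < j \<longrightarrow> {i,j} - range h = {\<sigma> i, \<sigma> j} - range h)"
proof -
  define f where "f = (\<lambda>e::'n\<times>'n. if fst e < snd e \<and> {fst e, snd e} - range h = {\<sigma> (fst e), \<sigma> (snd e)} - range h then 1 else (0::real))"
  define g where "g = (\<lambda>e::'n\<times>'n. if fst e < snd e then 1 else (0::real))"
  have A: "avec h \<bullet> edge_perm_matrix \<sigma> = sum f UNIV" unfolding f_def by (rule avec_epm[OF assms])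
  have N: "Nn TYPE('n) = sum g UNIV" unfolding g_def Nn_def by simp
  have le: "\<And>e. f e \<le> g e" unfolding f_def g_def by auto
  show "avec h \<bullet> edge_perm_matrix \<sigma> \<le> Nn TYPE('n)" unfolding A N by (rule sum_mono) (rule le)
  have "(sum f UNIV = sum g UNIV) \<longleftrightarrow> sum (\<lambda>e. g e - f e) UNIV = 0"
    unfolding sum_subtractf by linarith
  also have "\<dots> \<longleftrightarrow> (\<forall>e. g e - f e = 0)"
    using le by (subst sum_nonneg_eq_0_iff) auto
  also have "\<dots> \<longleftrightarrow> (\<forall>i j. i < j \<longrightarrow> {i,j} - range h = {\<sigma> i, \<sigma> j} - range h)"
    unfolding f_def g_def by auto
  finally show "avec h \<bullet> edge_perm_matrix \<sigma> = Nn TYPE('n) \<longleftrightarrow>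
         (\<forall>i j. i < j \<longrightarrow> {i,j} - range h = {\<sigma> i, \<sigma> j} - range h)" unfolding A N .
qed

lemma fixchar:
  assumes "\<sigma> permutes (UNIV::'n::{finite,linorder} set)" "CARD('m::{finite,linorder}) = 3"
    "strict_mono (h::'m \<Rightarrow> 'n)"
    and c: "\<forall>i j. i < j \<longrightarrow> {i,j} - range h = {\<sigma> i, \<sigma> j} - range h"
  shows "\<exists>\<tau>. \<tau> permutes (UNIV::'m set) \<and> \<sigma> = ext h \<tau>"
proof -
  have ih: "inj h" using assms(3) strict_mono_imp_inj_on by blast
  have isj: "inj \<sigma>" using assms(1) permutes_inj by blast
  have c2: "{i,j} - range h = {\<sigma> i, \<sigma> j} - range h" if "i \<noteq> j" for i j
  proof (cases "i < j")
    case True then show ?thesis using c by blast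
  next
    case False then have "j < i" using that by simp
    then show ?thesis using c[rule_format, of j i] by (simp add: insert_commute)
  qed
  have other: "\<exists>b. b \<noteq> x" for x :: 'm
  proof -
    have "card (UNIV - {x}) = 2" using assms(2) by (simp add: card_Diff_singleton)
    then have "UNIV - {x} \<noteq> {}" by (metis card.empty zero_neq_numeral)
    then show ?thesis by blast
  qed
  have inR: "\<sigma> a \<in> range h" if aR: "a \<in> range h" for a
  proof -
    obtain x where x: "a = h x" using aR by blast
    obtain y where y: "y \<noteq> x" using other by blast
    have "h y \<noteq> a" using x y ih by (auto simp: inj_eq)
    then have "{a, h y} - range h = {\<sigma> a, \<sigma> (h y)} - range h" using c2[of a "h y"] by simp
    moreover have "{a, h y} - range h = {}" using x by auto
    ultimately have "{\<sigma> a, \<sigma> (h y)} - range h = {}" by (simp only:)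
    then have "{\<sigma> a, \<sigma> (h y)} \<subseteq> range h" by (simp only: Diff_eq_empty_iff)
    then show ?thesis by simp
  qed
  have fixo: "\<sigma> v = v" if vR: "v \<notin> range h" for v
  proof -
    obtain x :: 'm where True by blast
    have "h x \<noteq> v" using vR by auto
    then have "{v, h x} - range h = {\<sigma> v, \<sigma> (h x)} - range h" using c2[of v "h x"] by simp
    moreover have "{v, h x} - range h = {v}" using vR by auto
    ultimately have E: "{\<sigma> v, \<sigma> (h x)} - range h = {v}" by simp
    have "v \<in> {\<sigma> v, \<sigma> (h x)}" using E by (metis DiffD1 singletonI)
    then have "v = \<sigma> v \<or> v = \<sigma> (h x)" by simp
    moreover have "\<sigma> (h x) \<in> range h" using inR by blast
    ultimately show ?thesis using vR by metis
  qed
  define \<tau> where "\<tau> = (\<lambda>x. inv h (\<sigma> (h x)))"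
  have ht: "h (\<tau> x) = \<sigma> (h x)" for x unfolding \<tau>_def using inR by (simp add: f_inv_into_f)
  have "inj \<tau>"
  proof (rule injI)
    fix x y assume "\<tau> x = \<tau> y"
    then have "\<sigma> (h x) = \<sigma> (h y)" using ht by metis
    then show "x = y" using isj ih by (simp add: inj_eq)
  qed
  then have tp: "\<tau> permutes UNIV" by (intro inj_imp_permutes) auto
  have "\<sigma> = ext h \<tau>"
  proof
    fix v show "\<sigma> v = ext h \<tau> v"
    proof (cases "v \<in> range h")
      case True
      then obtain x where "v = h x" by blast
      then show ?thesis using ht ih by (simp add: ext_def)
    next
      case False then show ?thesis using fixo by (simp add: ext_def)
    qed
  qed
  then show ?thesis using tp by blast
qed

lemma ext_compat:
  assumes "strict_mono (h::'m::{finite,linorder} \<Rightarrow> 'n::{finite,linorder})"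
  shows "{i,j} - range h = {ext h \<tau> i, ext h \<tau> j} - range h"
proof -
  show ?thesis by (auto simp: ext_def)
qed

lemma three_sorted:
  fixes S :: "'a::linorder set"
  assumes "finite S" "card S = 3"
  shows "\<exists>a b c. a < b \<and> b < c \<and> S = {a,b,c}"
proof -
  obtain xs where xs: "sorted_wrt (<) xs" "set xs = S"
    using ex1_sorted_list_for_set_if_finite[OF assms(1)] by blast
  have "distinct xs" using xs(1) strict_sorted_iff by blast
  then have "length xs = 3" using xs(2) assms(2) distinct_card by metis
  then obtain a b c where "xs = [a,b,c]"
    by (auto simp: numeral_3_eq_3 length_Suc_conv)
  then show ?thesis using xs by auto
qed

lemma exists_h:
  assumes "CARD('m::{finite,linorder}) = 3" "CARD('n::{finite,linorder}) \<ge> 3"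
  shows "\<exists>h::'m \<Rightarrow> 'n. strict_mono h"
proof -
  obtain m0 m1 m2 :: 'm where m: "m0 < m1" "m1 < m2" "UNIV = {m0,m1,m2}"
    using three_sorted[of "UNIV::'m set"] assms(1) by auto
  obtain S :: "'n set" where S: "card S = 3" "finite S"
    using obtain_subset_with_card_n[OF assms(2)] by metis
  obtain n0 n1 n2 :: 'n where n: "n0 < n1" "n1 < n2"
    using three_sorted[OF S(2,1)] by auto
  define h where "h x = (if x = m0 then n0 else if x = m1 then n1 else n2)" for x
  have "strict_mono h"
  proof (rule strict_monoI)
    fix x y :: 'm assume "x < y"
    moreover have "x \<in> {m0,m1,m2}" "y \<in> {m0,m1,m2}" using m(3) by auto
    ultimately show "h x < h y" using m n unfolding h_def by (elim insertE emptyE) (simp_all, auto)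
  qed
  then show ?thesis by blast
qed

lemma zero_coord_hull:
  assumes "x \<in> convex hull (phi :: (real ^ (('m::{finite,linorder} \<times> 'm) \<times> ('m \<times> 'm))) set)"
    and "\<not> (i < j \<and> k < l)"
  shows "x $ ((i,j),(k,l)) = 0"
proof -
  have c: "convex {x :: real ^ (('m \<times> 'm) \<times> ('m \<times> 'm)). x $ ((i,j),(k,l)) = 0}"
    by (simp add: convex_def)
  have "phi \<subseteq> {x :: real ^ (('m \<times> 'm) \<times> ('m \<times> 'm)). x $ ((i,j),(k,l)) = 0}"
    using assms(2) by (auto simp: phi_def epm_nth)
  then have "convex hull (phi :: (real ^ (('m \<times> 'm) \<times> ('m \<times> 'm))) set) \<subseteq> {x. x $ ((i,j),(k,l)) = 0}"
    using c by (rule hull_minimal)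
  then show ?thesis using assms(1) by blast
qed

lemma gmap_inj:
  assumes "strict_mono (h::'m::{finite,linorder} \<Rightarrow> 'n::{finite,linorder})"
  shows "inj_on (gmap h) (convex hull (phi :: (real ^ (('m \<times> 'm) \<times> ('m \<times> 'm))) set))"
proof (rule inj_onI)
  fix x y assume x: "x \<in> convex hull (phi :: (real ^ (('m \<times> 'm) \<times> ('m \<times> 'm))) set)"
    and y: "y \<in> convex hull (phi :: (real ^ (('m \<times> 'm) \<times> ('m \<times> 'm))) set)"
    and e: "gmap h x = gmap h y"
  have ih: "inj h" using assms strict_mono_imp_inj_on by blast
  show "x = y"
  proof (subst vec_eq_iff, rule allI)
    fix q :: "('m \<times> 'm) \<times> ('m \<times> 'm)"
    obtain i j k l where q: "q = ((i,j),(k,l))" by (metis prod.collapse)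
    show "x $ q = y $ q"
    proof (cases "i < j \<and> k < l")
      case True
      then have o: "h i < h j" "h k < h l" using assms by (simp_all add: strict_mono_less)
      have "gmap h x $ ((h i, h j),(h k, h l)) = gmap h y $ ((h i, h j),(h k, h l))" using e by simp
      then show ?thesis using o ih by (simp add: q gmap_nth)
    next
      case False
      then show ?thesis using zero_coord_hull[OF x] zero_coord_hull[OF y] by (simp add: q)
    qed
  qed
qed

lemma finite_phi: "finite (phi :: (real ^ (('n::{finite,linorder} \<times> 'n) \<times> ('n \<times> 'n))) set)"
  unfolding phi_def by (simp add: finite_permutations)

theorem lemma1:
  assumes "CARD('m::{finite,linorder}) = 3"
    and "CARD('n::{finite,linorder}) \<ge> 3"
  shows "\<exists>F. F face_of convex hull (phi :: (real ^ (('n \<times> 'n) \<times> ('n \<times> 'n))) set) \<and>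
             affinely_isomorphic (convex hull (phi :: (real ^ (('m \<times> 'm) \<times> ('m \<times> 'm))) set)) F"
proof -
  obtain h :: "'m \<Rightarrow> 'n" where h: "strict_mono h" using exists_h[OF assms] by blast
  define P where "P = (phi :: (real ^ (('n \<times> 'n) \<times> ('n \<times> 'n))) set)"
  define Q where "Q = (phi :: (real ^ (('m \<times> 'm) \<times> ('m \<times> 'm))) set)"
  define A where "A = avec h"
  define N where "N = Nn TYPE('n)"
  define aff where "aff = (\<lambda>z. gmap h z + cvec h)"
  have le: "\<forall>x\<in>convex hull P. A \<bullet> x \<le> N"
  proof -
    have "P \<subseteq> {x. A \<bullet> x \<le> N}" unfolding P_def phi_def A_def N_def using avec_bound(1) by blast
    then have "convex hull P \<subseteq> {x. A \<bullet> x \<le> N}" by (rule hull_minimal) (rule convex_halfspace_le)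
    then show ?thesis by blast
  qed
  define F where "F = convex hull P \<inter> {x. A \<bullet> x = N}"
  have face: "F face_of convex hull P" unfolding F_def
    by (rule face_of_Int_supporting_hyperplane_le) (use le in auto)
  have V: "P \<inter> {x. A \<bullet> x = N} = aff ` Q"
  proof
    show "P \<inter> {x. A \<bullet> x = N} \<subseteq> aff ` Q"
    proof
      fix x assume "x \<in> P \<inter> {x. A \<bullet> x = N}"
      then obtain \<sigma> where s: "\<sigma> permutes UNIV" "x = edge_perm_matrix \<sigma>" "A \<bullet> x = N"
        unfolding P_def phi_def by blast
      then have "\<forall>i j. i < j \<longrightarrow> {i,j} - range h = {\<sigma> i, \<sigma> j} - range h"
        using avec_bound(2)[OF s(1), of h] unfolding A_def N_def by simp
      then obtain \<tau> where t: "\<tau> permutes UNIV" "\<sigma> = ext h \<tau>" using fixchar[OF s(1) assms(1) h] by blast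
      then have "x = aff (edge_perm_matrix \<tau>)" using gmap_epm[OF assms(1) t(1) h] s(2) by (simp add: aff_def)
      moreover have "edge_perm_matrix \<tau> \<in> Q" using t(1) unfolding Q_def phi_def by blast
      ultimately show "x \<in> aff ` Q" by blast
    qed
  next
    show "aff ` Q \<subseteq> P \<inter> {x. A \<bullet> x = N}"
    proof
      fix x assume "x \<in> aff ` Q"
      then obtain \<tau> where t: "\<tau> permutes UNIV" "x = aff (edge_perm_matrix \<tau>)"
        unfolding Q_def phi_def by blast
      have x: "x = edge_perm_matrix (ext h \<tau>)" using gmap_epm[OF assms(1) t(1) h] t(2) by (simp add: aff_def)
      have p: "ext h \<tau> permutes UNIV" using ext_permutes[OF t(1) h] .
      have "\<forall>i j. i < j \<longrightarrow> {i,j} - range h = {ext h \<tau> i, ext h \<tau> j} - range h"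
        using ext_compat[OF h] by blast
      then have "A \<bullet> x = N" unfolding x A_def N_def using avec_bound(2)[OF p, of h] by simp
      moreover have "x \<in> P" unfolding P_def phi_def x using p by blast
      ultimately show "x \<in> P \<inter> {x. A \<bullet> x = N}" by blast
    qed
  qed
  have FP: "F = convex hull (P \<inter> F)"
  proof -
    have "compact P" unfolding P_def using finite_phi by (rule finite_imp_compact)
    then obtain S' where S': "S' \<subseteq> P" "F = convex hull S'" using face_of_convex_hull_subset[OF _ face] by metis
    have "S' \<subseteq> F" unfolding S'(2) by (rule hull_subset)
    then have "S' \<subseteq> P \<inter> F" using S'(1) by blast
    then have "F \<subseteq> convex hull (P \<inter> F)" unfolding S'(2) by (rule hull_mono)
    moreover have "convex hull (P \<inter> F) \<subseteq> F"
      using face_of_imp_convex[OF face] by (intro hull_minimal) auto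
    ultimately show ?thesis by blast
  qed
  have "P \<inter> F = P \<inter> {x. A \<bullet> x = N}" unfolding F_def using hull_subset[of P convex] by blast
  then have Feq: "F = convex hull (aff ` Q)" using FP V by simp
  have img: "aff ` (convex hull Q) = convex hull (aff ` Q)"
  proof -
    have e: "aff ` S = (\<lambda>x. cvec h + x) ` (gmap h ` S)" for S by (auto simp: aff_def image_image add.commute)
    have "aff ` (convex hull Q) = (\<lambda>x. cvec h + x) ` (gmap h ` (convex hull Q))" by (rule e)
    also have "\<dots> = (\<lambda>x. cvec h + x) ` (convex hull (gmap h ` Q))"
      by (simp only: convex_hull_linear_image[OF linear_gmap[of h]])
    also have "\<dots> = convex hull ((\<lambda>x. cvec h + x) ` (gmap h ` Q))"
      by (simp only: convex_hull_translation)
    also have "\<dots> = convex hull (aff ` Q)" by (simp only: e)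
    finally show ?thesis .
  qed
  have "bij_betw aff (convex hull Q) F"
    unfolding bij_betw_def
  proof
    show "inj_on aff (convex hull Q)"
      using gmap_inj[OF h] unfolding aff_def Q_def inj_on_def by simp
    show "aff ` (convex hull Q) = F" using img Feq by simp
  qed
  then have "affinely_isomorphic (convex hull Q) F"
    unfolding affinely_isomorphic_def aff_def using linear_gmap by blast
  then show ?thesis using face unfolding P_def Q_def by blast
qed

end
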